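(* Consider the system $u_{n+1,x}^j = F^j(x,n,u_{n,x}^j,u_n,u_{n+1})$, $j=1,\dots,N$, with analytic $F^j$, which can be uniquely rewritten as $u_{n-1,x}^j=G^j(x,n,u_{n,x}^j,u_n,u_{n-1})$. Let $$Y=\sum_{j=1}^{N}\left(\alpha^j(1)\frac{\partial}{\partial u^j_{n,x}}+\alpha^j(2)\frac{\partial}{\partial u^j_{n,xx}}+\alpha^j(3)\frac{\partial}{\partial u^j_{n,xxx}}+\cdots\right)$$ be a vector field whose coefficients are functions of the dynamical variables. If $$[D_x,Y]=hY$$ for some function $h$ of the dynamical variables, then $Y=0$.
   Context: The dynamical variables are $u^j_n,u^j_{n\pm1},u^j_{n\pm2},\dots$ and $u^j_{n,x},u^j_{n,xx},\dots$ ($1\le j\le N$), treated as independent. $D_x$ is the total derivative with respect to $x$ acting on functions of the dynamical variables, where $x$-derivatives of shifted variables are expressed through the system: $D_x u^j_{n+1}=F^j_n$, $D_xu^j_{n+2}=F^j_{n+1}$, $\dots$, $D_xu^j_{n-1}=G^j_n$, $\dots$, with $F^j_{n+i}=F^j(x,n+i,u^j_{n+i,x},u_{n+i},u_{n+i+1})$ and $G^j_{n-i}=G^j(x,n-i,u^j_{n-i,x},u_{n-i},u_{n-i-1})$. *)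

theory Defs
  imports "HOL-Analysis.Analysis"
begin

text \<open>Components are indexed by a finite type 'j (so N = CARD('j)).
  DX is the independent variable x; DU j i is u^j_{n+i} (i :: int);
  DUX j m is the (m+1)-th x-derivative u^j_{n,x...x} of u^j_n.\<close>

datatype 'j dvar = DX | DU 'j int | DUX 'j nat

type_synonym 'j state = "'j dvar \<Rightarrow> real"

definition dep :: "('j state \<Rightarrow> real) \<Rightarrow> 'j dvar set" where
  "dep f = {v. \<exists>p t. f (p(v := t)) \<noteq> f p}"

definition pd :: "('j state \<Rightarrow> real) \<Rightarrow> 'j dvar \<Rightarrow> 'j state \<Rightarrow> real" where
  "pd f v p = deriv (\<lambda>t. f (p(v := t))) (p v)"

fun pdl :: "'j dvar list \<Rightarrow> ('j state \<Rightarrow> real) \<Rightarrow> 'j state \<Rightarrow> real" where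
  "pdl [] f = f"
| "pdl (v # vs) f = pd (pdl vs f) v"

definition dynfun :: "('j state \<Rightarrow> real) \<Rightarrow> bool" where
  "dynfun f \<longleftrightarrow> finite (dep f) \<and>
     (\<forall>vs. continuous_on UNIV (pdl vs f) \<and>
        (\<forall>v p. ((\<lambda>t. pdl vs f (p(v := t))) has_real_derivative pd (pdl vs f) v p) (at (p v))))"

definition real_analytic_at :: "(('i::finite \<Rightarrow> real) \<Rightarrow> real) \<Rightarrow> ('i \<Rightarrow> real) \<Rightarrow> bool" where
  "real_analytic_at f y0 \<longleftrightarrow> (\<exists>r>0. \<exists>c :: ('i \<Rightarrow> nat) \<Rightarrow> real.
     \<forall>y. (\<forall>i. \<bar>y i - y0 i\<bar> < r) \<longrightarrow>
        ((\<lambda>a. c a * (\<Prod>i\<in>UNIV. (y i - y0 i) ^ a i)) has_sum f y) UNIV)"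

text \<open>Argument slots of F^j(x, n, u^j_{n,x}, u_n, u_{n+1}) (n fixed):
  AX = x, AB = u^j_{n,x}, AU l = u^l_n, AV l = u^l_{n+1}.\<close>
datatype 'j farg = AX | AB | AU 'j | AV 'j

instance farg :: (finite) finite
proof
  have "(UNIV :: 'a farg set) = {AX, AB} \<union> range AU \<union> range AV"
    by (auto intro: farg.exhaust)
  moreover have "finite ({AX, AB} \<union> range (AU :: 'a \<Rightarrow> 'a farg) \<union> range AV)" by simp
  ultimately show "finite (UNIV :: 'a farg set)" by simp
qed

definition analytic_rhs ::
  "(real \<Rightarrow> int \<Rightarrow> real \<Rightarrow> ('j::finite \<Rightarrow> real) \<Rightarrow> ('j \<Rightarrow> real) \<Rightarrow> real) \<Rightarrow> bool" where
  "analytic_rhs Fj \<longleftrightarrow> (\<forall>m y0. real_analytic_at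
      (\<lambda>y. Fj (y AX) m (y AB) (\<lambda>l. y (AU l)) (\<lambda>l. y (AV l))) y0)"

type_synonym 'j rhs = "'j \<Rightarrow> real \<Rightarrow> int \<Rightarrow> real \<Rightarrow> ('j \<Rightarrow> real) \<Rightarrow> ('j \<Rightarrow> real) \<Rightarrow> real"

text \<open>Fx F n j i p = u^j_{n+i,x} expressed in dynamical variables (i \<ge> 0).\<close>
fun Fx :: "'j rhs \<Rightarrow> int \<Rightarrow> 'j \<Rightarrow> nat \<Rightarrow> 'j state \<Rightarrow> real" where
  "Fx F n j 0 p = p (DUX j 0)"
| "Fx F n j (Suc i) p = F j (p DX) (n + int i) (Fx F n j i p)
      (\<lambda>l. p (DU l (int i))) (\<lambda>l. p (DU l (int i + 1)))"

text \<open>Gx G n j i p = u^j_{n-i,x} expressed in dynamical variables (i \<ge> 0).\<close>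
fun Gx :: "'j rhs \<Rightarrow> int \<Rightarrow> 'j \<Rightarrow> nat \<Rightarrow> 'j state \<Rightarrow> real" where
  "Gx G n j 0 p = p (DUX j 0)"
| "Gx G n j (Suc i) p = G j (p DX) (n - int i) (Gx G n j i p)
      (\<lambda>l. p (DU l (- int i))) (\<lambda>l. p (DU l (- int i - 1)))"

definition dxcoef :: "'j rhs \<Rightarrow> 'j rhs \<Rightarrow> int \<Rightarrow> 'j dvar \<Rightarrow> 'j state \<Rightarrow> real" where
  "dxcoef F G n v p = (case v of
       DX \<Rightarrow> 1
     | DUX j m \<Rightarrow> p (DUX j (Suc m))
     | DU j i \<Rightarrow> (if 0 \<le> i then Fx F n j (nat i) p else Gx G n j (nat (- i)) p))"

definition Dx :: "'j rhs \<Rightarrow> 'j rhs \<Rightarrow> int \<Rightarrow> ('j state \<Rightarrow> real) \<Rightarrow> 'j state \<Rightarrow> real" where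
  "Dx F G n f p = (\<Sum>v\<in>dep f. dxcoef F G n v p * pd f v p)"

text \<open>alpha j m is the coefficient alpha^j(m+1) of d/du^j_{n,x^(m+1)}.\<close>
definition ycoef :: "('j \<Rightarrow> nat \<Rightarrow> 'j state \<Rightarrow> real) \<Rightarrow> 'j dvar \<Rightarrow> 'j state \<Rightarrow> real" where
  "ycoef \<alpha> v p = (case v of DUX j m \<Rightarrow> \<alpha> j m p | _ \<Rightarrow> 0)"

definition Yop :: "('j \<Rightarrow> nat \<Rightarrow> 'j state \<Rightarrow> real) \<Rightarrow> ('j state \<Rightarrow> real) \<Rightarrow> 'j state \<Rightarrow> real" where
  "Yop \<alpha> f p = (\<Sum>v\<in>dep f. ycoef \<alpha> v p * pd f v p)"

end

theory Submission imports Defs begin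

lemma analytic_line_deriv:
  fixes f :: "('i::finite \<Rightarrow> real) \<Rightarrow> real"
  assumes "real_analytic_at f y0"
  shows "\<exists>D. ((\<lambda>t. f (y0(i0 := t))) has_real_derivative D) (at (y0 i0))"
proof -
  obtain r c where r: "r > 0" and H: "\<And>y. (\<forall>i. \<bar>y i - y0 i\<bar> < r) \<Longrightarrow>
        ((\<lambda>a. c a * (\<Prod>i\<in>UNIV. (y i - y0 i) ^ a i)) has_sum f y) UNIV"
    using assms unfolding real_analytic_at_def by blast
  define e where "e k = (\<lambda>i. if i = i0 then k else (0::nat))" for k
  define d where "d k = c (e k)" for k
  have inj: "inj e" unfolding inj_def e_def by (auto dest: fun_cong[where x=i0])
  have S: "(\<lambda>k. d k * s^k) sums f (y0(i0 := s + y0 i0))" if s: "\<bar>s\<bar> < r" for s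
  proof -
    let ?y = "y0(i0 := s + y0 i0)"
    have h1: "((\<lambda>a. c a * (\<Prod>i\<in>UNIV. (?y i - y0 i) ^ a i)) has_sum f ?y) UNIV"
      using H[of ?y] s r by auto
    have prod: "(\<Prod>i\<in>UNIV. (?y i - y0 i) ^ a i) = (if a \<in> range e then s ^ a i0 else 0)" for a
    proof -
      have "(\<Prod>i\<in>UNIV. (?y i - y0 i) ^ a i) = (?y i0 - y0 i0) ^ a i0 * (\<Prod>i\<in>UNIV-{i0}. (?y i - y0 i) ^ a i)"
        by (subst prod.remove[of UNIV i0]) simp_all
      also have "(\<Prod>i\<in>UNIV-{i0}. (?y i - y0 i) ^ a i) = (\<Prod>i\<in>UNIV-{i0}. (0::real) ^ a i)"
        by (rule prod.cong) auto
      finally have eq: "(\<Prod>i\<in>UNIV. (?y i - y0 i) ^ a i) = s ^ a i0 * (\<Prod>i\<in>UNIV-{i0}. (0::real) ^ a i)" by simp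
      show ?thesis
      proof (cases "a \<in> range e")
        case True
        then obtain k where "a = e k" by auto
        then have "(\<Prod>i\<in>UNIV-{i0}. (0::real) ^ a i) = 1" by (auto simp: e_def intro!: prod.neutral)
        then show ?thesis using eq True by simp
      next
        case False
        have "\<exists>i. i \<noteq> i0 \<and> a i \<noteq> 0"
        proof (rule ccontr)
          assume "\<not> ?thesis"
          then have "a = e (a i0)" unfolding e_def by (auto intro!: ext)
          then show False using False by auto
        qed
        then obtain i where "i \<noteq> i0" "a i \<noteq> 0" by blast
        then have "(\<Prod>i\<in>UNIV-{i0}. (0::real) ^ a i) = 0" by (auto intro!: prod_zero exI[of _ i])
        then show ?thesis using eq False by simp
      qed
    qed
    have "((\<lambda>a. c a * s ^ a i0) has_sum f ?y) (range e)"
    proof -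
      have h2: "((\<lambda>a. c a * (if a \<in> range e then s ^ a i0 else 0)) has_sum f ?y) UNIV"
        using h1 unfolding prod .
      show ?thesis
        using h2 by (subst (asm) has_sum_cong_neutral[where T="range e" and g="\<lambda>a. c a * s ^ a i0"]) auto
    qed
    then have "(((\<lambda>a. c a * s ^ a i0) \<circ> e) has_sum f ?y) UNIV"
      using has_sum_reindex[OF inj_on_subset[OF inj subset_UNIV]] by blast
    then have "((\<lambda>k. d k * s^k) has_sum f ?y) UNIV"
      by (simp add: o_def d_def e_def)
    then show ?thesis by (rule has_sum_imp_sums)
  qed
  have summ: "\<And>z. norm z < r \<Longrightarrow> summable (\<lambda>k. d k * z^k)"
    using S sums_summable by auto
  have D: "((\<lambda>z. \<Sum>k. d k * z^k) has_field_derivative (\<Sum>k. diffs d k * 0^k)) (at (0::real))"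
    by (rule termdiffs_strong'[OF summ]) (use r in auto)
  have "((\<lambda>z. f (y0(i0 := z + y0 i0))) has_field_derivative (\<Sum>k. diffs d k * 0^k)) (at (0::real))"
    apply (rule has_field_derivative_transform_within_open[OF D, of "{-r<..<r}"])
     apply simp apply (simp add: \<open>r > 0\<close>)
    apply (rule sums_unique[symmetric]) apply (rule S) by (simp add: abs_less_iff)
  then have "((\<lambda>t. f (y0(i0 := t))) has_field_derivative (\<Sum>k. diffs d k * 0^k)) (at (0 + y0 i0))"
    by (subst DERIV_shift) simp
  then show ?thesis by auto
qed


lemma deriv_id': "deriv (\<lambda>t::real. t) x = 1"
  by (rule DERIV_imp_deriv) (rule DERIV_ident)

lemma deriv_const': "deriv (\<lambda>t::real. c::real) x = 0"
  by (rule DERIV_imp_deriv) (rule DERIV_const)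

lemma dep_coord: "dep (\<lambda>p. p w) = {w}"
proof -
  have "w \<in> dep (\<lambda>p. p w)" unfolding dep_def
    by (auto intro!: exI[of _ "\<lambda>_. 0"] exI[of _ 1])
  moreover have "v \<notin> dep (\<lambda>p. p w)" if "v \<noteq> w" for v
    using that unfolding dep_def by auto
  ultimately show ?thesis by auto
qed

lemma dep_const: "dep (\<lambda>p. c) = {}"
  unfolding dep_def by auto

lemma pd_coord: "pd (\<lambda>p. p w) v = (\<lambda>p. if v = w then 1 else 0)"
  by (rule ext) (auto simp: pd_def deriv_id' deriv_const')

lemma pd_const: "pd (\<lambda>p. c) v = (\<lambda>p. 0)"
  by (rule ext) (auto simp: pd_def deriv_const')

lemma pdl_coord: "vs \<noteq> [] \<Longrightarrow> \<exists>c. pdl vs (\<lambda>p. p w) = (\<lambda>p. c)"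
proof (induction vs)
  case Nil then show ?case by simp
next
  case (Cons v vs)
  show ?case
  proof (cases "vs = []")
    case True then show ?thesis by (auto simp: pd_coord)
  next
    case False
    then obtain c where "pdl vs (\<lambda>p. p w) = (\<lambda>p. c)" using Cons by auto
    then show ?thesis by (auto simp: pd_const)
  qed
qed

lemma dynfun_coord: "dynfun (\<lambda>p. p w)"
  unfolding dynfun_def
proof (intro conjI allI)
  show "finite (dep (\<lambda>p. p w))" by (simp add: dep_coord)
next
  fix vs :: "'a dvar list"
  show "continuous_on UNIV (pdl vs (\<lambda>p. p w))"
  proof (cases "vs = []")
    case True then show ?thesis by simp
  next
    case False
    then obtain c where "pdl vs (\<lambda>p. p w) = (\<lambda>p. c)" using pdl_coord by blast
    then show ?thesis by simp
  qed
next
  fix vs :: "'a dvar list" and v p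
  show "((\<lambda>t. pdl vs (\<lambda>p. p w) (p(v := t))) has_real_derivative pd (pdl vs (\<lambda>p. p w)) v p) (at (p v))"
  proof (cases "vs = []")
    case True then show ?thesis
      by (cases "v = w") (auto simp: pd_coord intro!: derivative_eq_intros)
  next
    case False
    then obtain c where "pdl vs (\<lambda>p. p w) = (\<lambda>p. c)" using pdl_coord by blast
    then show ?thesis by (simp add: pd_const)
  qed
qed

lemma Yop_coord: "Yop \<alpha> (\<lambda>p. p w) p = ycoef \<alpha> w p"
  by (simp add: Yop_def dep_coord pd_coord)

lemma Dx_coord: "Dx F G n (\<lambda>p. p w) p = dxcoef F G n w p"
  by (simp add: Dx_def dep_coord pd_coord)

lemma Dx_zero: "Dx F G n (\<lambda>p. 0) p = 0"
  by (simp add: Dx_def dep_const)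


theorem lemma3:
  fixes F G :: "('j::finite) rhs"
    and n :: int
    and \<alpha> :: "'j \<Rightarrow> nat \<Rightarrow> 'j state \<Rightarrow> real"
    and h :: "'j state \<Rightarrow> real"
  assumes F_analytic: "\<forall>j. analytic_rhs (F j)"
    and rewrite_unique: "\<forall>j x m a b u v. a = F j x m b u v \<longleftrightarrow> b = G j x (m + 1) a v u"
    and alpha_fun: "\<forall>j k. dynfun (\<alpha> j k)"
    and h_fun: "dynfun h"
    and commutator: "\<forall>f. dynfun f \<longrightarrow>
        (\<forall>p. Dx F G n (Yop \<alpha> f) p - Yop \<alpha> (Dx F G n f) p = h p * Yop \<alpha> f p)"
  shows "\<forall>j k p. \<alpha> j k p = 0"
proof -
  have inj: "b = b'" if "F j x m b u v = F j x m b' u v" for j x m b b' u v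
  proof -
    have "b = G j x (m + 1) (F j x m b u v) v u" using rewrite_unique by blast
    moreover have "b' = G j x (m + 1) (F j x m b u v) v u" using rewrite_unique that by metis
    ultimately show ?thesis by simp
  qed
  have base: "\<alpha> j 0 p = 0" for j p
  proof -
    define \<phi> where "\<phi> p t = F j (p DX) n t (\<lambda>l. p (DU l 0)) (\<lambda>l. p (DU l 1))" for p :: "'j state" and t
    define g where "g p = \<phi> p (p (DUX j 0))" for p
    define A where "A = {DX, DUX j 0} \<union> range (\<lambda>l. DU l 0) \<union> range (\<lambda>l. DU l (1::int))"
    have Dxf: "Dx F G n (\<lambda>p. p (DU j 1)) = g"
      by (rule ext) (simp add: Dx_coord dxcoef_def g_def \<phi>_def)
    have Yf: "Yop \<alpha> (\<lambda>p. p (DU j 1)) = (\<lambda>p. 0)"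
      by (rule ext) (simp add: Yop_coord ycoef_def)
    have Yg0: "Yop \<alpha> g p = 0" for p
    proof -
      have "Dx F G n (Yop \<alpha> (\<lambda>p. p (DU j 1))) p - Yop \<alpha> (Dx F G n (\<lambda>p. p (DU j 1))) p
            = h p * Yop \<alpha> (\<lambda>p. p (DU j 1)) p"
        using commutator dynfun_coord[of "DU j 1"] by blast
      then show ?thesis unfolding Dxf Yf by (simp add: Dx_zero)
    qed
    have depA: "dep g \<subseteq> A"
    proof
      fix v assume "v \<in> dep g"
      then obtain p t where ne: "g (p(v := t)) \<noteq> g p" unfolding dep_def by auto
      show "v \<in> A"
      proof (rule ccontr)
        assume "v \<notin> A"
        then have "v \<noteq> DX" "v \<noteq> DUX j 0" "\<And>l. v \<noteq> DU l 0" "\<And>l. v \<noteq> DU l 1"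
          unfolding A_def by auto
        then have "\<And>l. DU l 0 \<noteq> v" "\<And>l. DU l 1 \<noteq> v" "DX \<noteq> v" "DUX j 0 \<noteq> v" by metis+
        then have "g (p(v := t)) = g p" unfolding g_def \<phi>_def by (simp add: fun_upd_apply)
        then show False using ne by simp
      qed
    qed
    have finA: "finite A" unfolding A_def by simp
    have finD: "finite (dep g)" using depA finA finite_subset by blast
    have inD: "DUX j 0 \<in> dep g"
    proof -
      let ?p = "(\<lambda>_. 0) :: 'j state"
      have "g (?p(DUX j 0 := 1)) \<noteq> g ?p"
      proof
        assume "g (?p(DUX j 0 := 1)) = g ?p"
        then have "F j 0 n 1 (\<lambda>l. 0) (\<lambda>l. 0) = F j 0 n 0 (\<lambda>l. 0) (\<lambda>l. 0)"
          unfolding g_def \<phi>_def by simp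
        then show False using inj by fastforce
      qed
      then show ?thesis unfolding dep_def by blast
    qed
    have phi_upd: "\<phi> (q(DUX j 0 := t)) = \<phi> q" for q t
      by (rule ext) (simp add: \<phi>_def)
    have key: "\<alpha> j 0 q * deriv (\<phi> q) (q (DUX j 0)) = 0" for q
    proof -
      have "Yop \<alpha> g q = (\<Sum>v\<in>dep g. ycoef \<alpha> v q * pd g v q)" by (simp add: Yop_def)
      also have "\<dots> = ycoef \<alpha> (DUX j 0) q * pd g (DUX j 0) q + (\<Sum>v\<in>dep g - {DUX j 0}. ycoef \<alpha> v q * pd g v q)"
        using finD inD by (simp add: sum.remove)
      also have "(\<Sum>v\<in>dep g - {DUX j 0}. ycoef \<alpha> v q * pd g v q) = 0"
      proof (rule sum.neutral, rule ballI)
        fix v assume "v \<in> dep g - {DUX j 0}"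
        then have "v \<in> A - {DUX j 0}" using depA by auto
        then have "ycoef \<alpha> v q = 0" unfolding A_def ycoef_def by auto
        then show "ycoef \<alpha> v q * pd g v q = 0" by simp
      qed
      also have "pd g (DUX j 0) q = deriv (\<phi> q) (q (DUX j 0))"
        unfolding pd_def g_def by (simp add: phi_upd)
      finally show ?thesis using Yg0[of q] by (simp add: ycoef_def)
    qed
    have phider: "(\<phi> q has_real_derivative deriv (\<phi> q) s) (at s)" for q s
    proof -
      define y0 where "y0 = (\<lambda>a. case a of AX \<Rightarrow> q DX | AB \<Rightarrow> s | AU l \<Rightarrow> q (DU l 0) | AV l \<Rightarrow> q (DU l 1))"
      have "real_analytic_at (\<lambda>y. F j (y AX) n (y AB) (\<lambda>l. y (AU l)) (\<lambda>l. y (AV l))) y0"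
        using F_analytic unfolding analytic_rhs_def by blast
      from analytic_line_deriv[OF this, of AB] obtain D where
        "((\<lambda>t. F j ((y0(AB := t)) AX) n ((y0(AB := t)) AB) (\<lambda>l. (y0(AB := t)) (AU l)) (\<lambda>l. (y0(AB := t)) (AV l))) has_real_derivative D) (at (y0 AB))"
        by blast
      then have "(\<phi> q has_real_derivative D) (at s)"
        by (simp add: y0_def \<phi>_def[abs_def])
      then show ?thesis using DERIV_imp_deriv by metis
    qed
    show ?thesis
    proof (rule ccontr)
      assume ne: "\<alpha> j 0 p \<noteq> 0"
      define \<psi> where "\<psi> t = \<alpha> j 0 (p(DUX j 0 := t))" for t
      define b0 where "b0 = p (DUX j 0)"
      have "\<psi> b0 = \<alpha> j 0 p" by (simp add: \<psi>_def b0_def)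
      have "(\<psi> has_real_derivative pd (pdl [] (\<alpha> j 0)) (DUX j 0) p) (at b0)"
      proof -
        have "dynfun (\<alpha> j 0)" using alpha_fun by blast
        then have "\<forall>v p. ((\<lambda>t. pdl [] (\<alpha> j 0) (p(v := t))) has_real_derivative pd (pdl [] (\<alpha> j 0)) v p) (at (p v))"
          unfolding dynfun_def by blast
        then show ?thesis unfolding \<psi>_def b0_def by simp
      qed
      then have "continuous (at b0) \<psi>"
        using DERIV_isCont by blast
      then obtain e where e: "e > 0" and eN: "\<And>y. dist b0 y < e \<Longrightarrow> \<psi> y \<noteq> 0"
        using continuous_at_avoid[of b0 \<psi> 0] ne \<open>\<psi> b0 = \<alpha> j 0 p\<close> by auto
      have "b0 < b0 + e/2" using e by simp
      from MVT2[OF this, of "\<phi> p" "deriv (\<phi> p)"] phider obtain z where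
        z: "b0 < z" "z < b0 + e/2" "\<phi> p (b0 + e/2) - \<phi> p b0 = (b0 + e/2 - b0) * deriv (\<phi> p) z"
        by blast
      have "\<phi> p (b0 + e/2) \<noteq> \<phi> p b0"
      proof
        assume "\<phi> p (b0 + e/2) = \<phi> p b0"
        then have "b0 + e/2 = b0" unfolding \<phi>_def by (rule inj)
        then show False using e by simp
      qed
      then have d: "deriv (\<phi> p) z \<noteq> 0" using z by auto
      have "\<psi> z \<noteq> 0" using eN z by (simp add: dist_real_def)
      moreover have "\<alpha> j 0 (p(DUX j 0 := z)) * deriv (\<phi> p) z = 0"
        using key[of "p(DUX j 0 := z)"] by (simp add: phi_upd)
      ultimately show False using d by (simp add: \<psi>_def)
    qed
  qed
  have "\<alpha> j k p = 0" for j k p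
  proof (induction k arbitrary: p)
    case 0 then show ?case by (rule base)
  next
    case (Suc k)
    have Yf: "Yop \<alpha> (\<lambda>p. p (DUX j k)) = (\<lambda>p. 0)"
      by (rule ext) (simp add: Yop_coord ycoef_def Suc.IH)
    have Dxf: "Dx F G n (\<lambda>p. p (DUX j k)) = (\<lambda>p. p (DUX j (Suc k)))"
      by (rule ext) (simp add: Dx_coord dxcoef_def)
    show ?case
    proof -
      have "Dx F G n (Yop \<alpha> (\<lambda>p. p (DUX j k))) p - Yop \<alpha> (Dx F G n (\<lambda>p. p (DUX j k))) p
            = h p * Yop \<alpha> (\<lambda>p. p (DUX j k)) p"
        using commutator dynfun_coord[of "DUX j k"] by blast
      then show ?thesis unfolding Dxf Yf by (simp add: Dx_zero Yop_coord ycoef_def)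
    qed
  qed
  then show ?thesis by blast
qed

end
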